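(* Let $f:(k+1)^V\to\mathbb{R}_{\ge0}$ be non-negative, monotone and $k$-submodular with all marginal values $\Delta_{e,j}f(S)\in[0,1]$, and let $F$ be its multilinear extension. Let $x\in\mathcal P$, $\mu_0=F(x)$, and let $R=(R_1,\dots,R_k)\in(k+1)^V$ be the random output of randomized swap rounding applied to $x$ (with any decomposition of $\bar x$ into bases). Then $\mathbb{E}[f(R)]\ge\mu_0$, and for every $\delta>0$, $$\Pr[f(R)\le(1-\delta)\mu_0]\le e^{-\mu_0\delta^2/8}.$$
   Context: Let $V=[n]=\{1,\dots,n\}$ and let $k\ge 1$ be an integer. Write $(k+1)^V$ for the set of $k$-tuples $S=(S_1,\dots,S_k)$ of pairwise disjoint subsets of $V$. For $S,T\in(k+1)^V$ let $S\sqcap T=(S_1\cap T_1,\dots,S_k\cap T_k)$ and let $S\sqcup T$ be the tuple whose $j$-th component is $(S_j\cup T_j)\setminus\bigcup_{l\neq j}(S_l\cup T_l)$. A function $f:(k+1)^V\to\mathbb{R}$ is $k$-submodular if $f(S)+f(T)\ge f(S\sqcap T)+f(S\sqcup T)$ for all $S,T\in(k+1)^V$. Write $S\preceq T$ if $S_j\subseteq T_j$ for all $j$; $f$ is monotone if $S\preceq T$ implies $f(S)\le f(T)$. For $e\notin\bigcup_l S_l$ and $j\in[k]$, $\Delta_{e,j}f(S)=f(S_1,\dots,S_{j-1},S_j\cup\{e\},S_{j+1},\dots,S_k)-f(S)$. Let $\mathcal P=\{x\in[0,1]^{n\times k}:\sum_{j=1}^k x_{i,j}\le 1\ \forall i\in[n]\}$.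 The multilinear extension of $f$ is the polynomial $F(x)=\sum_{S\in(k+1)^V} f(S_1,\dots,S_k)\Big(\prod_{j\in[k]}\prod_{i\in S_j}x_{i,j}\Big)\prod_{i\in V\setminus\bigcup_j S_j}\Big(1-\sum_{j=1}^k x_{i,j}\Big)$, considered on $\mathcal P$. Randomized swap rounding: let $E=[n]\times\{0,1,\dots,k\}$ and call $C\subseteq E$ a base if it contains exactly one element of each row $\{i\}\times\{0,\dots,k\}$ (bases of a partition matroid). For $x\in\mathcal P$ let $\bar x\in[0,1]^E$ be given by $\bar x_{i,j}=x_{i,j}$ for $j\ge1$ and $\bar x_{i,0}=1-\sum_{j\ge1}x_{i,j}$. Write $\bar x=\sum_{l=1}^m\beta_l\mathbf 1_{B_l}$ with $\beta_l>0$, $\sum_l\beta_l=1$, $B_l$ bases. Set $C_1=B_1$, $\gamma_1=\beta_1$. For $l=1,\dots,m-1$, merge $C_l$ (weight $\gamma_l$) with $B_{l+1}$ (weight $\beta_{l+1}$): with $C=C_l$, $B=B_{l+1}$, while $C\neq B$ pick a row $i$ where they differ, with $c\in C\setminus B$ and $b\in B\setminus C$ the elements of row $i$; with probability $\gamma_l/(\gamma_l+\beta_{l+1})$ replace $B$ by $B-b+c$, otherwise replace $C$ by $C-c+b$ (the choice of row may depend on the history). When $C=B$, set $C_{l+1}=C$ and $\gamma_{l+1}=\gamma_l+\beta_{l+1}$. The output is $R=(R_1,\dots,R_k)$ with $R_j=\{i:(i,j)\in C_m\}$. *)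

theory Defs
  imports "HOL-Probability.Probability"
begin

text \<open>A k-tuple (S_1,...,S_k) is represented as a function S :: nat => nat set,
  with S j the j-th component for j in {1..k} and S j = {} otherwise.\<close>

definition ktuples :: "nat \<Rightarrow> nat \<Rightarrow> (nat \<Rightarrow> nat set) set" where
  "ktuples n k = {S. (\<forall>j\<in>{1..k}. S j \<subseteq> {1..n})
     \<and> (\<forall>j\<in>{1..k}. \<forall>l\<in>{1..k}. j \<noteq> l \<longrightarrow> S j \<inter> S l = {})
     \<and> (\<forall>j. j \<notin> {1..k} \<longrightarrow> S j = {})}"

definition kmeet :: "(nat \<Rightarrow> nat set) \<Rightarrow> (nat \<Rightarrow> nat set) \<Rightarrow> (nat \<Rightarrow> nat set)" where
  "kmeet S T = (\<lambda>j. S j \<inter> T j)"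

definition kjoin :: "nat \<Rightarrow> (nat \<Rightarrow> nat set) \<Rightarrow> (nat \<Rightarrow> nat set) \<Rightarrow> (nat \<Rightarrow> nat set)" where
  "kjoin k S T = (\<lambda>j. if j \<in> {1..k}
      then (S j \<union> T j) - (\<Union>l\<in>{1..k} - {j}. S l \<union> T l) else {})"

definition k_submodular :: "nat \<Rightarrow> nat \<Rightarrow> ((nat \<Rightarrow> nat set) \<Rightarrow> real) \<Rightarrow> bool" where
  "k_submodular n k f = (\<forall>S\<in>ktuples n k. \<forall>T\<in>ktuples n k.
      f S + f T \<ge> f (kmeet S T) + f (kjoin k S T))"

definition kpreceq :: "nat \<Rightarrow> (nat \<Rightarrow> nat set) \<Rightarrow> (nat \<Rightarrow> nat set) \<Rightarrow> bool" where
  "kpreceq k S T = (\<forall>j\<in>{1..k}. S j \<subseteq> T j)"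

definition k_monotone :: "nat \<Rightarrow> nat \<Rightarrow> ((nat \<Rightarrow> nat set) \<Rightarrow> real) \<Rightarrow> bool" where
  "k_monotone n k f = (\<forall>S\<in>ktuples n k. \<forall>T\<in>ktuples n k. kpreceq k S T \<longrightarrow> f S \<le> f T)"

definition marginal :: "((nat \<Rightarrow> nat set) \<Rightarrow> real) \<Rightarrow> nat \<Rightarrow> nat \<Rightarrow> (nat \<Rightarrow> nat set) \<Rightarrow> real" where
  "marginal f e j S = f (S(j := insert e (S j))) - f S"

definition polytopeP :: "nat \<Rightarrow> nat \<Rightarrow> (nat \<Rightarrow> nat \<Rightarrow> real) \<Rightarrow> bool" where
  "polytopeP n k x = ((\<forall>i\<in>{1..n}. \<forall>j\<in>{1..k}. 0 \<le> x i j \<and> x i j \<le> 1)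
      \<and> (\<forall>i\<in>{1..n}. (\<Sum>j\<in>{1..k}. x i j) \<le> 1))"

definition multilinear_ext ::
  "nat \<Rightarrow> nat \<Rightarrow> ((nat \<Rightarrow> nat set) \<Rightarrow> real) \<Rightarrow> (nat \<Rightarrow> nat \<Rightarrow> real) \<Rightarrow> real" where
  "multilinear_ext n k f x = (\<Sum>S\<in>ktuples n k. f S
      * (\<Prod>j\<in>{1..k}. \<Prod>i\<in>S j. x i j)
      * (\<Prod>i\<in>{1..n} - (\<Union>j\<in>{1..k}. S j). 1 - (\<Sum>j\<in>{1..k}. x i j)))"

definition is_base :: "nat \<Rightarrow> nat \<Rightarrow> (nat \<times> nat) set \<Rightarrow> bool" where
  "is_base n k C = (C \<subseteq> {1..n} \<times> {0..k} \<and> (\<forall>i\<in>{1..n}. \<exists>!j. (i, j) \<in> C))"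

definition xbar :: "nat \<Rightarrow> (nat \<Rightarrow> nat \<Rightarrow> real) \<Rightarrow> nat \<Rightarrow> nat \<Rightarrow> real" where
  "xbar k x i j = (if j = 0 then 1 - (\<Sum>l\<in>{1..k}. x i l) else x i j)"

definition is_decomposition ::
  "nat \<Rightarrow> nat \<Rightarrow> (nat \<Rightarrow> nat \<Rightarrow> real) \<Rightarrow> (real \<times> (nat \<times> nat) set) list \<Rightarrow> bool" where
  "is_decomposition n k x D = ((\<forall>(\<beta>, B)\<in>set D. \<beta> > 0 \<and> is_base n k B)
      \<and> (\<Sum>l<length D. fst (D ! l)) = 1
      \<and> (\<forall>i\<in>{1..n}. \<forall>j\<in>{0..k}.
           xbar k x i j = (\<Sum>l<length D. fst (D ! l) * (if (i, j) \<in> snd (D ! l) then 1 else 0))))"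

text \<open>Randomized swap rounding with an arbitrary, history-dependent choice of rows.
  swap_round n gamma C L p means: p is a possible output distribution of the process
  started in the state where the accumulated base is C with weight gamma and L is the
  list of remaining (weight, base) pairs, whose head is the base currently being merged
  (possibly already modified by earlier swaps of this merge). Each derivation corresponds
  to a (deterministic) adaptive strategy for choosing rows depending on the full history.\<close>
inductive swap_round ::
  "nat \<Rightarrow> real \<Rightarrow> (nat \<times> nat) set \<Rightarrow> (real \<times> (nat \<times> nat) set) list
     \<Rightarrow> (nat \<times> nat) set pmf \<Rightarrow> bool" for n where
  finish: "swap_round n \<gamma> C [] (return_pmf C)"
| merged: "swap_round n (\<gamma> + \<beta>) C L p \<Longrightarrow> swap_round n \<gamma> C ((\<beta>, C) # L) p"
| swap: "\<lbrakk> C \<noteq> B; i \<in> {1..n}; c \<in> C - B; b \<in> B - C; fst c = i; fst b = i;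
          swap_round n \<gamma> C ((\<beta>, insert c (B - {b})) # L) p1;
          swap_round n \<gamma> (insert b (C - {c})) ((\<beta>, B) # L) p2 \<rbrakk>
        \<Longrightarrow> swap_round n \<gamma> C ((\<beta>, B) # L)
              (bind_pmf (bernoulli_pmf (\<gamma> / (\<gamma> + \<beta>))) (\<lambda>h. if h then p1 else p2))"

definition base_to_tuple :: "nat \<Rightarrow> (nat \<times> nat) set \<Rightarrow> (nat \<Rightarrow> nat set)" where
  "base_to_tuple k C = (\<lambda>j. if j \<in> {1..k} then {i. (i, j) \<in> C} else {})"

end

theory Submission
  imports Defs
begin


definition AS :: "nat \<Rightarrow> nat set \<Rightarrow> (nat \<Rightarrow> nat) set" where
  "AS k I = {\<sigma>. \<forall>i. (i \<in> I \<longrightarrow> \<sigma> i \<le> k) \<and> (i \<notin> I \<longrightarrow> \<sigma> i = 0)}"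

definition EE :: "nat \<Rightarrow> nat set \<Rightarrow> (nat \<Rightarrow> nat \<Rightarrow> real) \<Rightarrow> ((nat \<Rightarrow> nat) \<Rightarrow> real) \<Rightarrow> real" where
  "EE k I w \<phi> = (\<Sum>\<sigma>\<in>AS k I. \<phi> \<sigma> * (\<Prod>i\<in>I. w i (\<sigma> i)))"

lemma AS_empty: "AS k {} = {\<lambda>_. 0}"
  unfolding AS_def by auto

lemma AS_insert: assumes "i \<notin> I"
  shows "AS k (insert i I) = (\<lambda>(j,\<tau>). \<tau>(i:=j)) ` ({..k} \<times> AS k I)"
proof
  show "AS k (insert i I) \<subseteq> (\<lambda>(j,\<tau>). \<tau>(i:=j)) ` ({..k} \<times> AS k I)"
  proof
    fix \<sigma> assume s: "\<sigma> \<in> AS k (insert i I)"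
    have "\<sigma> = (\<lambda>(j,\<tau>). \<tau>(i:=j)) (\<sigma> i, \<sigma>(i:=0))" by auto
    moreover have "(\<sigma> i, \<sigma>(i:=0)) \<in> {..k} \<times> AS k I" using s assms unfolding AS_def by auto
    ultimately show "\<sigma> \<in> (\<lambda>(j,\<tau>). \<tau>(i:=j)) ` ({..k} \<times> AS k I)" by blast
  qed
  show "(\<lambda>(j,\<tau>). \<tau>(i:=j)) ` ({..k} \<times> AS k I) \<subseteq> AS k (insert i I)"
    using assms unfolding AS_def by auto
qed

lemma AS_inj: assumes "i \<notin> I"
  shows "inj_on (\<lambda>(j,\<tau>). \<tau>(i:=j)) ({..k} \<times> AS k I)"
proof (rule inj_onI, clarify)
  fix j \<tau> j' \<tau>' assume a: "\<tau> \<in> AS k I" "\<tau>' \<in> AS k I" "\<tau>(i := j) = \<tau>'(i := j')"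
  from a(3) have "j = j'" by (metis fun_upd_same)
  moreover have "\<tau> = \<tau>'"
  proof
    fix l show "\<tau> l = \<tau>' l"
    proof (cases "l = i")
      case True then show ?thesis using a assms unfolding AS_def by auto
    next
      case False then show ?thesis using fun_cong[OF a(3), of l] by auto
    qed
  qed
  ultimately show "j = j' \<and> \<tau> = \<tau>'" by simp
qed

lemma AS_finite: "finite I \<Longrightarrow> finite (AS k I)"
proof (induction I rule: finite_induct)
  case empty then show ?case by (simp add: AS_empty)
next
  case (insert i I) then show ?case by (simp add: AS_insert)
qed

lemma EE_empty: "EE k {} w \<phi> = \<phi> (\<lambda>_. 0)"
  unfolding EE_def AS_empty by simp

lemma EE_insert: assumes "finite I" "i \<notin> I"
  shows "EE k (insert i I) w \<phi> = (\<Sum>j\<le>k. w i j * EE k I w (\<lambda>\<tau>. \<phi> (\<tau>(i:=j))))"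
proof -
  have "EE k (insert i I) w \<phi> = (\<Sum>p\<in>{..k} \<times> AS k I. (\<lambda>\<sigma>. \<phi> \<sigma> * (\<Prod>l\<in>insert i I. w l (\<sigma> l))) ((\<lambda>(j,\<tau>). \<tau>(i:=j)) p))"
    unfolding EE_def AS_insert[OF assms(2)] by (rule sum.reindex[OF AS_inj[OF assms(2)], unfolded comp_def])
  also have "\<dots> = (\<Sum>j\<le>k. \<Sum>\<tau>\<in>AS k I. \<phi> (\<tau>(i:=j)) * (w i j * (\<Prod>l\<in>I. w l (\<tau> l))))"
  proof -
    have "\<And>j \<tau>. (\<Prod>l\<in>insert i I. w l ((\<tau>(i:=j)) l)) = w i j * (\<Prod>l\<in>I. w l (\<tau> l))"
    proof -
      fix j \<tau>
      have "(\<Prod>l\<in>I. w l ((\<tau>(i:=j)) l)) = (\<Prod>l\<in>I. w l (\<tau> l))"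
        using assms(2) by (intro prod.cong) auto
      then show "(\<Prod>l\<in>insert i I. w l ((\<tau>(i:=j)) l)) = w i j * (\<Prod>l\<in>I. w l (\<tau> l))"
        using assms by (simp add: prod.insert)
    qed
    note eq = this
    show ?thesis unfolding sum.cartesian_product
      by (rule sum.cong[OF refl]) (auto simp: eq simp del: fun_upd_apply)
  qed
  also have "\<dots> = (\<Sum>j\<le>k. w i j * EE k I w (\<lambda>\<tau>. \<phi> (\<tau>(i:=j))))"
    unfolding EE_def by (simp add: sum_distrib_left mult_ac)
  finally show ?thesis .
qed

lemma EE_mono:
  assumes "\<And>\<sigma>. \<sigma> \<in> AS k I \<Longrightarrow> \<phi> \<sigma> \<le> \<psi> \<sigma>" "\<And>i j. i \<in> I \<Longrightarrow> j \<le> k \<Longrightarrow> 0 \<le> w i j"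
  shows "EE k I w \<phi> \<le> EE k I w \<psi>"
  unfolding EE_def
proof (rule sum_mono)
  fix \<sigma> assume s: "\<sigma> \<in> AS k I"
  have "0 \<le> (\<Prod>i\<in>I. w i (\<sigma> i))" using s assms(2) unfolding AS_def by (intro prod_nonneg) auto
  then show "\<phi> \<sigma> * (\<Prod>i\<in>I. w i (\<sigma> i)) \<le> \<psi> \<sigma> * (\<Prod>i\<in>I. w i (\<sigma> i))"
    using assms(1)[OF s] by (rule mult_right_mono[rotated])
qed

lemma EE_diff: "EE k I w (\<lambda>\<sigma>. \<phi> \<sigma> - \<psi> \<sigma>) = EE k I w \<phi> - EE k I w \<psi>"
  unfolding EE_def by (simp add: left_diff_distrib sum_subtractf)

lemma EE_add: "EE k I w (\<lambda>\<sigma>. \<phi> \<sigma> + \<psi> \<sigma>) = EE k I w \<phi> + EE k I w \<psi>"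
  unfolding EE_def by (simp add: distrib_right sum.distrib)

lemma EE_cmult: "EE k I w (\<lambda>\<sigma>. c * \<phi> \<sigma>) = c * EE k I w \<phi>"
  unfolding EE_def by (simp add: sum_distrib_left mult_ac)

lemma EE_cong: "(\<And>\<sigma>. \<sigma> \<in> AS k I \<Longrightarrow> \<phi> \<sigma> = \<psi> \<sigma>) \<Longrightarrow> EE k I w \<phi> = EE k I w \<psi>"
  unfolding EE_def by (intro sum.cong) auto

lemma EE_cong_w: "(\<And>i j. i \<in> I \<Longrightarrow> j \<le> k \<Longrightarrow> w i j = w' i j) \<Longrightarrow> EE k I w \<phi> = EE k I w' \<phi>"
  unfolding EE_def AS_def by (intro sum.cong refl arg_cong2[where f="(*)"] prod.cong) auto

lemma EE_one:
  assumes "finite I" "\<And>i. i \<in> I \<Longrightarrow> (\<Sum>j\<le>k. w i j) = 1"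
  shows "EE k I w (\<lambda>_. 1) = 1"
  using assms
proof (induction I rule: finite_induct)
  case empty then show ?case by (simp add: EE_empty)
next
  case (insert i I) then show ?case by (simp add: EE_insert)
qed

lemma EE_const:
  assumes "finite I" "\<And>i. i \<in> I \<Longrightarrow> (\<Sum>j\<le>k. w i j) = 1"
  shows "EE k I w (\<lambda>_. c) = c"
  using EE_cmult[of k I w c "\<lambda>_. 1"] EE_one[OF assms] by simp

lemma exp_convex_bound:
  fixes lam t :: real assumes "0 \<le> t" "t \<le> 1"
  shows "exp (- lam * t) \<le> 1 + (exp (- lam) - 1) * t"
proof -
  have "exp ((1 - t) *\<^sub>R 0 + t *\<^sub>R (- lam)) \<le> (1 - t) * exp 0 + t * exp (- lam)"
    by (rule convex_onD[OF exp_convex]) (use assms in auto)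
  then show ?thesis by (simp add: algebra_simps)
qed

lemma pointwise_bound:
  fixes lam d e :: real assumes "0 \<le> lam" "0 \<le> e" "e \<le> d" "d \<le> 1"
  shows "exp (- lam * d - (exp (- lam) - 1) * e) \<le> 1 + (exp (- lam) - 1) * (d - e)"
proof -
  have "0 \<le> lam + (exp (- lam) - 1)" using exp_ge_add_one_self[of "- lam"] by simp
  then have "- lam * d - (exp (- lam) - 1) * e \<le> - lam * (d - e)"
    using assms mult_nonneg_nonneg[of "lam + (exp (- lam) - 1)" e] by (simp add: algebra_simps)
  then have "exp (- lam * d - (exp (- lam) - 1) * e) \<le> exp (- lam * (d - e))" by simp
  also have "\<dots> \<le> 1 + (exp (- lam) - 1) * (d - e)" by (rule exp_convex_bound) (use assms in auto)
  finally show ?thesis .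
qed

lemma scalar_bound:
  fixes lam B :: real and w d e :: "nat \<Rightarrow> real"
  assumes "finite J" "\<And>j. j \<in> J \<Longrightarrow> 0 \<le> w j" "(\<Sum>j\<in>J. w j) = 1"
    "\<And>j. j \<in> J \<Longrightarrow> 0 \<le> e j \<and> e j \<le> d j \<and> d j \<le> 1" "0 \<le> lam"
  shows "(\<Sum>j\<in>J. w j * exp (B - lam * d j - (exp (- lam) - 1) * e j))
      \<le> exp (B + (exp (- lam) - 1) * (\<Sum>j\<in>J. w j * (d j - e j)))"
proof -
  have "(\<Sum>j\<in>J. w j * exp (B - lam * d j - (exp (- lam) - 1) * e j))
      = exp B * (\<Sum>j\<in>J. w j * exp (- lam * d j - (exp (- lam) - 1) * e j))"
  proof -
    have "\<And>j. exp (B - lam * d j - (exp (- lam) - 1) * e j) = exp B * exp (- lam * d j - (exp (- lam) - 1) * e j)"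
      by (simp add: exp_add[symmetric])
    then show ?thesis by (simp add: sum_distrib_left mult_ac)
  qed
  also have "\<dots> \<le> exp B * (\<Sum>j\<in>J. w j * (1 + (exp (- lam) - 1) * (d j - e j)))"
    by (intro mult_left_mono sum_mono mult_left_mono pointwise_bound) (use assms in auto)
  also have "(\<Sum>j\<in>J. w j * (1 + (exp (- lam) - 1) * (d j - e j)))
      = 1 + (exp (- lam) - 1) * (\<Sum>j\<in>J. w j * (d j - e j))"
    using assms(3) by (simp add: distrib_left sum.distrib sum_distrib_left mult_ac)
  also have "exp B * \<dots> \<le> exp B * exp ((exp (- lam) - 1) * (\<Sum>j\<in>J. w j * (d j - e j)))"
    by (intro mult_left_mono exp_ge_add_one_self) auto
  finally show ?thesis by (simp add: exp_add)
qed

definition mg :: "nat set \<Rightarrow> (nat \<Rightarrow> nat) \<Rightarrow> (nat \<Rightarrow> nat) \<Rightarrow> (nat \<Rightarrow> nat)" where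
  "mg I \<tau> \<rho> = (\<lambda>l. if l \<in> I then \<tau> l else \<rho> l)"

lemma mg_AS: "\<tau> \<in> AS k I \<Longrightarrow> \<rho> \<in> AS k U \<Longrightarrow> I \<subseteq> U \<Longrightarrow> mg I \<tau> \<rho> \<in> AS k U"
  unfolding AS_def mg_def by auto

lemma mg_insert: "i \<notin> I \<Longrightarrow> mg (insert i I) (\<tau>(i:=j)) \<rho> = mg I \<tau> (\<rho>(i:=j))"
  unfolding mg_def by auto

lemma mg_upd: "i \<notin> I \<Longrightarrow> mg I \<tau> (\<rho>(i:=j)) = (mg I \<tau> \<rho>)(i:=j)"
  unfolding mg_def by auto

lemma mgf_bound:
  fixes h :: "(nat \<Rightarrow> nat) \<Rightarrow> real" and U :: "nat set" and lam :: real
  assumes U: "finite U"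
    and W: "\<And>i j. i \<in> U \<Longrightarrow> j \<le> k \<Longrightarrow> 0 \<le> w i j" "\<And>i. i \<in> U \<Longrightarrow> (\<Sum>j\<le>k. w i j) = 1"
    and H1: "\<And>\<sigma> i j. \<sigma> \<in> AS k U \<Longrightarrow> i \<in> U \<Longrightarrow> j \<in> {1..k} \<Longrightarrow> \<sigma> i = 0 \<Longrightarrow>
               0 \<le> h (\<sigma>(i:=j)) - h \<sigma> \<and> h (\<sigma>(i:=j)) - h \<sigma> \<le> 1"
    and H2: "\<And>\<sigma> \<tau> i j. \<sigma> \<in> AS k U \<Longrightarrow> \<tau> \<in> AS k U \<Longrightarrow> (\<forall>l. \<sigma> l \<noteq> 0 \<longrightarrow> \<tau> l = \<sigma> l) \<Longrightarrow>
               i \<in> U \<Longrightarrow> \<tau> i = 0 \<Longrightarrow> j \<in> {1..k} \<Longrightarrow> h (\<tau>(i:=j)) - h \<tau> \<le> h (\<sigma>(i:=j)) - h \<sigma>"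
    and lam: "0 \<le> lam"
  shows "I \<subseteq> U \<Longrightarrow> \<rho> \<in> AS k U \<Longrightarrow> (\<forall>i\<in>I. \<rho> i = 0) \<Longrightarrow>
    EE k I w (\<lambda>\<tau>. exp (- lam * h (mg I \<tau> \<rho>)))
      \<le> exp (- lam * h \<rho> + (exp (- lam) - 1) * (EE k I w (\<lambda>\<tau>. h (mg I \<tau> \<rho>)) - h \<rho>))"
proof (induction I arbitrary: \<rho> rule: infinite_finite_induct)
  case (infinite I) then show ?case using finite_subset[OF _ U] by blast
next
  case empty then show ?case by (simp add: EE_empty mg_def)
next
  case (insert i I)
  define a where "a = exp (- lam) - 1"
  have iU: "i \<in> U" and IU: "I \<subseteq> U" using insert.prems by auto
  have fI: "finite I" by fact
  have ri: "\<rho> i = 0" using insert.prems by auto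
  define \<rho>j where "\<rho>j j = \<rho>(i:=j)" for j
  have rjA: "\<rho>j j \<in> AS k U" if "j \<le> k" for j using insert.prems(2) that iU unfolding \<rho>j_def AS_def by auto
  have rjI: "\<forall>l\<in>I. \<rho>j j l = 0" for j using insert.prems(3) insert.hyps(2) unfolding \<rho>j_def by auto
  have r0: "\<rho>j 0 = \<rho>" using ri unfolding \<rho>j_def by auto
  define Hj where "Hj j = EE k I w (\<lambda>\<tau>. h (mg I \<tau> (\<rho>j j)))" for j
  define d where "d j = h (\<rho>j j) - h \<rho>" for j
  define e where "e j = (Hj 0 - h \<rho>) - (Hj j - h (\<rho>j j))" for j
  have WI: "\<And>i. i \<in> I \<Longrightarrow> (\<Sum>j\<le>k. w i j) = 1" using W(2) IU by auto
  have WI0: "\<And>i j. i \<in> I \<Longrightarrow> j \<le> k \<Longrightarrow> 0 \<le> w i j" using W(1) IU by auto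
  have de: "0 \<le> e j \<and> e j \<le> d j \<and> d j \<le> 1" if j: "j \<le> k" for j
  proof (cases "j = 0")
    case True then show ?thesis by (simp add: d_def e_def r0)
  next
    case False
    then have j1: "j \<in> {1..k}" using j by auto
    have mgA: "mg I \<tau> \<rho> \<in> AS k U" if "\<tau> \<in> AS k I" for \<tau> using mg_AS[OF that insert.prems(2) IU] .
    have mgi: "mg I \<tau> \<rho> i = 0" for \<tau> using ri insert.hyps(2) unfolding mg_def by auto
    have mgj: "mg I \<tau> (\<rho>j j) = (mg I \<tau> \<rho>)(i:=j)" for \<tau> unfolding \<rho>j_def by (rule mg_upd[OF insert.hyps(2)])
    have d01: "0 \<le> d j \<and> d j \<le> 1" using H1[OF insert.prems(2) iU j1 ri] unfolding d_def \<rho>j_def by simp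
    have "Hj j - Hj 0 = EE k I w (\<lambda>\<tau>. h (mg I \<tau> (\<rho>j j)) - h (mg I \<tau> \<rho>))"
      unfolding Hj_def r0 by (simp add: EE_diff)
    also have "\<dots> \<le> EE k I w (\<lambda>\<tau>. d j)"
    proof (rule EE_mono[OF _ WI0])
      fix \<tau> assume t: "\<tau> \<in> AS k I"
      have "\<forall>l. \<rho> l \<noteq> 0 \<longrightarrow> mg I \<tau> \<rho> l = \<rho> l" using insert.prems(3) unfolding mg_def by auto
      from H2[OF insert.prems(2) mgA[OF t] this iU mgi j1]
      show "h (mg I \<tau> (\<rho>j j)) - h (mg I \<tau> \<rho>) \<le> d j" using mgj[of \<tau>] unfolding d_def \<rho>j_def by simp
    qed auto
    also have "\<dots> = d j" by (rule EE_const[OF fI WI])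
    finally have 1: "Hj j - Hj 0 \<le> d j" .
    have "0 \<le> EE k I w (\<lambda>\<tau>. h (mg I \<tau> (\<rho>j j)) - h (mg I \<tau> \<rho>))"
    proof -
      have "EE k I w (\<lambda>\<tau>. 0) \<le> EE k I w (\<lambda>\<tau>. h (mg I \<tau> (\<rho>j j)) - h (mg I \<tau> \<rho>))"
      proof (rule EE_mono[OF _ WI0])
        fix \<tau> assume t: "\<tau> \<in> AS k I"
        show "0 \<le> h (mg I \<tau> (\<rho>j j)) - h (mg I \<tau> \<rho>)"
          using H1[OF mgA[OF t] iU j1 mgi] mgj[of \<tau>] by simp
      qed auto
      then show ?thesis by (simp add: EE_const[OF fI WI])
    qed
    then have 2: "Hj 0 \<le> Hj j" unfolding Hj_def r0 by (simp add: EE_diff)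
    show ?thesis using 1 2 d01 unfolding e_def d_def by simp
  qed
  have IH: "EE k I w (\<lambda>\<tau>. exp (- lam * h (mg I \<tau> (\<rho>j j))))
      \<le> exp (- lam * h \<rho> + a * (Hj 0 - h \<rho>) - lam * d j - a * e j)" if "j \<le> k" for j
  proof -
    have "EE k I w (\<lambda>\<tau>. exp (- lam * h (mg I \<tau> (\<rho>j j))))
       \<le> exp (- lam * h (\<rho>j j) + a * (Hj j - h (\<rho>j j)))"
      using insert.IH[OF IU rjA[OF that] rjI] unfolding Hj_def a_def by simp
    also have "\<dots> = exp (- lam * h \<rho> + a * (Hj 0 - h \<rho>) - lam * d j - a * e j)"
      unfolding d_def e_def by (simp add: algebra_simps)
    finally show ?thesis .
  qed
  have "EE k (insert i I) w (\<lambda>\<tau>. exp (- lam * h (mg (insert i I) \<tau> \<rho>)))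
      = (\<Sum>j\<le>k. w i j * EE k I w (\<lambda>\<tau>. exp (- lam * h (mg I \<tau> (\<rho>j j)))))"
    unfolding EE_insert[OF fI insert.hyps(2)] mg_insert[OF insert.hyps(2)] \<rho>j_def ..
  also have "\<dots> \<le> (\<Sum>j\<le>k. w i j * exp (- lam * h \<rho> + a * (Hj 0 - h \<rho>) - lam * d j - a * e j))"
    by (intro sum_mono mult_left_mono IH W(1)[OF iU]) auto
  also have "\<dots> \<le> exp (- lam * h \<rho> + a * (Hj 0 - h \<rho>) + a * (\<Sum>j\<le>k. w i j * (d j - e j)))"
    using scalar_bound[of "{..k}" "w i" e d lam "- lam * h \<rho> + a * (Hj 0 - h \<rho>)"] W[OF iU] de lam
    unfolding a_def by auto
  also have "- lam * h \<rho> + a * (Hj 0 - h \<rho>) + a * (\<Sum>j\<le>k. w i j * (d j - e j))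
      = - lam * h \<rho> + a * (EE k (insert i I) w (\<lambda>\<tau>. h (mg (insert i I) \<tau> \<rho>)) - h \<rho>)"
  proof -
    have "EE k (insert i I) w (\<lambda>\<tau>. h (mg (insert i I) \<tau> \<rho>)) = (\<Sum>j\<le>k. w i j * Hj j)"
      unfolding EE_insert[OF fI insert.hyps(2)] mg_insert[OF insert.hyps(2)] \<rho>j_def Hj_def ..
    also have "\<dots> = (\<Sum>j\<le>k. w i j * (Hj 0 + (d j - e j)))"
      unfolding d_def e_def by (simp add: algebra_simps)
    also have "\<dots> = Hj 0 + (\<Sum>j\<le>k. w i j * (d j - e j))"
      using W(2)[OF iU] by (simp add: distrib_left sum.distrib sum_distrib_left[symmetric] mult_ac)
    finally show ?thesis by (simp add: algebra_simps)
  qed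
  finally show ?case unfolding a_def .
qed



definition gr :: "nat set \<Rightarrow> (nat \<Rightarrow> nat) \<Rightarrow> (nat \<times> nat) set" where
  "gr U \<sigma> = {(i, \<sigma> i) | i. i \<in> U}"

definition ypt :: "real \<Rightarrow> (nat \<times> nat) set \<Rightarrow> (real \<times> (nat \<times> nat) set) list \<Rightarrow> nat \<Rightarrow> nat \<Rightarrow> real" where
  "ypt \<gamma> C L = (\<lambda>i j. \<gamma> * (if (i,j) \<in> C then 1 else 0)
      + (\<Sum>(\<beta>,B)\<leftarrow>L. \<beta> * (if (i,j) \<in> B then 1 else 0)))"

lemma finite_bases: "finite {C. is_base n k C}"
proof (rule finite_subset)
  show "{C. is_base n k C} \<subseteq> Pow ({1..n} \<times> {0..k})" unfolding is_base_def by auto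
qed auto

lemma base_swap:
  assumes "is_base n k B" "is_base n k C" "c \<in> C - B" "b \<in> B - C" "fst c = i" "fst b = i"
  shows "is_base n k (insert c (B - {b}))"
proof -
  obtain cj where c: "c = (i, cj)" using assms(5) by (metis prod.collapse)
  obtain bj where b: "b = (i, bj)" using assms(6) by (metis prod.collapse)
  have Bs: "B \<subseteq> {1..n} \<times> {0..k}" and Bu: "\<And>i'. i' \<in> {1..n} \<Longrightarrow> \<exists>!j. (i', j) \<in> B"
    using assms(1) unfolding is_base_def by auto
  have Cs: "C \<subseteq> {1..n} \<times> {0..k}" using assms(2) unfolding is_base_def by auto
  have bB: "(i, bj) \<in> B" using assms(4) b by simp
  have cC: "(i, cj) \<in> C" using assms(3) c by simp
  have iU: "i \<in> {1..n}" using bB Bs by auto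
  have rowB: "j = bj" if "(i, j) \<in> B" for j
  proof -
    obtain j1 where "\<And>j. (i, j) \<in> B \<Longrightarrow> j = j1" using Bu[OF iU] by (elim ex1E) blast
    then show ?thesis using bB that by metis
  qed
  have sub: "insert c (B - {b}) \<subseteq> {1..n} \<times> {0..k}" using Bs Cs cC c by blast
  have ex: "\<exists>!j. (i', j) \<in> insert c (B - {b})" if i': "i' \<in> {1..n}" for i'
  proof (cases "i' = i")
    case True
    show ?thesis
    proof (rule ex1I[of _ cj])
      show "(i', cj) \<in> insert c (B - {b})" using True c by simp
      fix j assume "(i', j) \<in> insert c (B - {b})"
      then have "(i, j) = (i, cj) \<or> ((i, j) \<in> B \<and> (i, j) \<noteq> (i, bj))" using True c b by simp
      then show "j = cj" using rowB by auto
    qed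
  next
    case False
    obtain j0 where j0: "(i', j0) \<in> B" "\<And>j. (i', j) \<in> B \<Longrightarrow> j = j0" using Bu[OF i'] by (elim ex1E) blast
    show ?thesis
    proof (rule ex1I[of _ j0])
      show "(i', j0) \<in> insert c (B - {b})" using j0(1) False b by simp
      fix j assume "(i', j) \<in> insert c (B - {b})"
      then have "(i', j) \<in> B" using False c by simp
      then show "j = j0" by (rule j0(2))
    qed
  qed
  show ?thesis unfolding is_base_def using sub ex by simp
qed


lemma finish_EE:
  assumes "is_base n k C"
  shows "EE k {1..n} (\<lambda>i j. if (i,j) \<in> C then 1 else 0) (\<lambda>\<sigma>. g (gr {1..n} \<sigma>)) = g C"
proof -
  define U where "U = {1..n}"
  define s where "s = (\<lambda>i. if i \<in> U then (THE j. (i,j) \<in> C) else 0)"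
  have th: "(i, s i) \<in> C" if "i \<in> U" for i
  proof -
    have "\<exists>!j. (i,j) \<in> C" using assms that unfolding is_base_def U_def by auto
    then show ?thesis unfolding s_def using that by (auto intro: theI')
  qed
  have uq: "j = s i" if "i \<in> U" "(i,j) \<in> C" for i j
    using assms that th unfolding is_base_def U_def by blast
  have Cs: "C \<subseteq> U \<times> {0..k}" using assms unfolding is_base_def U_def by auto
  have sA: "s \<in> AS k U" unfolding AS_def
  proof (intro CollectI allI conjI impI)
    fix i assume "i \<in> U"
    then have "(i, s i) \<in> C" by (rule th)
    then show "s i \<le> k" using Cs by auto
  next
    fix i assume "i \<notin> U" then show "s i = 0" unfolding s_def by simp
  qed
  have grs: "gr U s = C"
  proof
    show "gr U s \<subseteq> C" using th unfolding gr_def by auto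
    show "C \<subseteq> gr U s"
    proof
      fix p assume p: "p \<in> C"
      then have "fst p \<in> U" using assms unfolding is_base_def U_def by auto
      obtain a b where ab: "p = (a, b)" by (cases p)
      have "b = s a" using uq[of a b] p ab \<open>fst p \<in> U\<close> by simp
      then show "p \<in> gr U s" using ab \<open>fst p \<in> U\<close> unfolding gr_def by auto
    qed
  qed
  have zero: "(\<Prod>i\<in>U. (if (i, \<sigma> i) \<in> C then 1 else 0::real)) = 0" if "\<sigma> \<in> AS k U - {s}" for \<sigma>
  proof -
    have "\<sigma> \<noteq> s" using that by auto
    then obtain i where "\<sigma> i \<noteq> s i" by auto
    moreover have "i \<in> U"
    proof (rule ccontr)
      assume "i \<notin> U"
      then have "\<sigma> i = 0" "s i = 0" using that sA unfolding AS_def by auto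
      with \<open>\<sigma> i \<noteq> s i\<close> show False by simp
    qed
    ultimately have "i \<in> U" "(i, \<sigma> i) \<notin> C" using uq by auto
    then show ?thesis by (intro prod_zero) (auto simp: U_def)
  qed
  have one: "(\<Prod>i\<in>U. (if (i, s i) \<in> C then 1 else 0::real)) = 1" using th by simp
  have "EE k U (\<lambda>i j. if (i,j) \<in> C then 1 else 0) (\<lambda>\<sigma>. g (gr U \<sigma>))
     = g (gr U s) * (\<Prod>i\<in>U. (if (i, s i) \<in> C then 1 else 0)) +
       (\<Sum>\<sigma>\<in>AS k U - {s}. g (gr U \<sigma>) * (\<Prod>i\<in>U. (if (i, \<sigma> i) \<in> C then 1 else 0)))"
    unfolding EE_def by (rule sum.remove[OF AS_finite sA]) (simp add: U_def)
  also have "\<dots> = g C" using zero one grs by simp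
  finally show ?thesis unfolding U_def .
qed

lemma bern_expect:
  fixes g :: "'a \<Rightarrow> real"
  assumes "finite Fin" "set_pmf p1 \<subseteq> Fin" "set_pmf p2 \<subseteq> Fin" "0 \<le> q" "q \<le> 1"
  shows "measure_pmf.expectation (bind_pmf (bernoulli_pmf q) (\<lambda>h. if h then p1 else p2)) g
       = q * measure_pmf.expectation p1 g + (1 - q) * measure_pmf.expectation p2 g"
    and "set_pmf (bind_pmf (bernoulli_pmf q) (\<lambda>h. if h then p1 else p2)) \<subseteq> Fin"
proof -
  let ?P = "bind_pmf (bernoulli_pmf q) (\<lambda>h. if h then p1 else p2)"
  show sP: "set_pmf ?P \<subseteq> Fin" using assms(2,3) by (auto split: if_splits)
  have E: "measure_pmf.expectation r g = (\<Sum>a\<in>Fin. g a * pmf r a)" if "set_pmf r \<subseteq> Fin" for r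
    by (rule integral_measure_pmf_real) (use assms(1) that in auto)
  have pm: "pmf ?P a = q * pmf p1 a + (1 - q) * pmf p2 a" for a
  proof -
    have "pmf ?P a = (\<integral>h. pmf (if h then p1 else p2) a \<partial>measure_pmf (bernoulli_pmf q))"
      by (rule pmf_bind)
    also have "\<dots> = (\<Sum>h\<in>{True, False}. pmf (if h then p1 else p2) a * pmf (bernoulli_pmf q) h)"
      by (rule integral_measure_pmf_real) auto
    also have "\<dots> = q * pmf p1 a + (1 - q) * pmf p2 a" using assms(4,5) by simp
    finally show ?thesis .
  qed
  show "measure_pmf.expectation ?P g = q * measure_pmf.expectation p1 g + (1 - q) * measure_pmf.expectation p2 g"
    unfolding E[OF sP] E[OF assms(2)] E[OF assms(3)] pm
    by (simp add: distrib_left sum.distrib sum_distrib_left mult_ac)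
qed

lemma EE_affine:
  assumes "finite U" "i \<in> U" "\<And>a b. a \<noteq> i \<Longrightarrow> v a b = 0"
  shows "EE k U (\<lambda>a b. w a b + t * v a b) \<phi>
       = EE k U w \<phi> + t * (\<Sum>\<sigma>\<in>AS k U. \<phi> \<sigma> * v i (\<sigma> i) * (\<Prod>l\<in>U - {i}. w l (\<sigma> l)))"
proof -
  have P1: "(\<Prod>l\<in>U. w l (\<sigma> l) + t * v l (\<sigma> l)) = (w i (\<sigma> i) + t * v i (\<sigma> i)) * (\<Prod>l\<in>U - {i}. w l (\<sigma> l))" for \<sigma>
  proof -
    have "(\<Prod>l\<in>U. w l (\<sigma> l) + t * v l (\<sigma> l)) = (w i (\<sigma> i) + t * v i (\<sigma> i)) * (\<Prod>l\<in>U - {i}. w l (\<sigma> l) + t * v l (\<sigma> l))"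
      by (rule prod.remove[OF assms(1,2)])
    also have "(\<Prod>l\<in>U - {i}. w l (\<sigma> l) + t * v l (\<sigma> l)) = (\<Prod>l\<in>U - {i}. w l (\<sigma> l))"
      using assms(3) by (intro prod.cong) auto
    finally show ?thesis .
  qed
  have P2: "(\<Prod>l\<in>U. w l (\<sigma> l)) = w i (\<sigma> i) * (\<Prod>l\<in>U - {i}. w l (\<sigma> l))" for \<sigma>
    by (rule prod.remove[OF assms(1,2)])
  have "EE k U (\<lambda>a b. w a b + t * v a b) \<phi> = (\<Sum>\<sigma>\<in>AS k U. \<phi> \<sigma> * ((w i (\<sigma> i) + t * v i (\<sigma> i)) * (\<Prod>l\<in>U - {i}. w l (\<sigma> l))))"
    unfolding EE_def using P1 by simp
  also have "\<dots> = (\<Sum>\<sigma>\<in>AS k U. \<phi> \<sigma> * (w i (\<sigma> i) * (\<Prod>l\<in>U - {i}. w l (\<sigma> l))))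
      + t * (\<Sum>\<sigma>\<in>AS k U. \<phi> \<sigma> * v i (\<sigma> i) * (\<Prod>l\<in>U - {i}. w l (\<sigma> l)))"
    by (simp add: distrib_left distrib_right sum.distrib sum_distrib_left mult_ac)
  also have "(\<Sum>\<sigma>\<in>AS k U. \<phi> \<sigma> * (w i (\<sigma> i) * (\<Prod>l\<in>U - {i}. w l (\<sigma> l)))) = EE k U w \<phi>"
    unfolding EE_def using P2 by simp
  finally show ?thesis .
qed

lemma swap_main:
  assumes "swap_round n \<gamma> C L p"
  shows "0 < \<gamma> \<Longrightarrow> is_base n k C \<Longrightarrow> (\<forall>(\<beta>,B)\<in>set L. 0 < \<beta> \<and> is_base n k B) \<Longrightarrow>
    \<gamma> + sum_list (map fst L) = 1 \<Longrightarrow>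
    set_pmf p \<subseteq> {C. is_base n k C} \<and>
    (\<forall>g. measure_pmf.expectation p g = EE k {1..n} (ypt \<gamma> C L) (\<lambda>\<sigma>. g (gr {1..n} \<sigma>)))"
  using assms
proof induction
  case (finish \<gamma> C)
  then have g1: "\<gamma> = 1" by simp
  have "ypt \<gamma> C [] = (\<lambda>i j. if (i,j) \<in> C then 1 else 0)" unfolding ypt_def g1 by (intro ext) simp
  then show ?case using finish_EE[OF finish(2)] finish(2) by simp
next
  case (merged \<gamma> \<beta> C L p)
  have y: "ypt (\<gamma> + \<beta>) C L = ypt \<gamma> C ((\<beta>, C) # L)" unfolding ypt_def by (intro ext) (simp add: algebra_simps)
  have "set_pmf p \<subseteq> {C. is_base n k C} \<and>
    (\<forall>g. measure_pmf.expectation p g = EE k {1..n} (ypt (\<gamma> + \<beta>) C L) (\<lambda>\<sigma>. g (gr {1..n} \<sigma>)))"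
    using merged.prems by (intro merged.IH) (auto simp: algebra_simps)
  then show ?case unfolding y .
next
  case (swap C B i c b \<gamma> \<beta> L p1 p2)
  have bpos: "0 < \<beta>" and Bb: "is_base n k B" using swap.prems(3) by auto
  have Lok: "\<forall>(\<beta>,B)\<in>set L. 0 < \<beta> \<and> is_base n k B" using swap.prems(3) by auto
  have B'b: "is_base n k (insert c (B - {b}))" by (rule base_swap[OF Bb swap.prems(2) swap.hyps(3,4,5,6)])
  have C'b: "is_base n k (insert b (C - {c}))" by (rule base_swap[OF swap.prems(2) Bb swap.hyps(4,3,6,5)])
  have R1: "set_pmf p1 \<subseteq> {C. is_base n k C} \<and>
    (\<forall>g. measure_pmf.expectation p1 g = EE k {1..n} (ypt \<gamma> C ((\<beta>, insert c (B - {b})) # L)) (\<lambda>\<sigma>. g (gr {1..n} \<sigma>)))"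
    using swap.prems B'b bpos Lok by (intro swap.IH(1)) auto
  have R2: "set_pmf p2 \<subseteq> {C. is_base n k C} \<and>
    (\<forall>g. measure_pmf.expectation p2 g = EE k {1..n} (ypt \<gamma> (insert b (C - {c})) ((\<beta>, B) # L)) (\<lambda>\<sigma>. g (gr {1..n} \<sigma>)))"
    using swap.prems C'b bpos Lok by (intro swap.IH(2)) auto
  define q where "q = \<gamma> / (\<gamma> + \<beta>)"
  have q01: "0 \<le> q" "q \<le> 1" unfolding q_def using swap.prems(1) bpos by auto
  define v where "v = (\<lambda>a j. (if (a, j) = c then 1 else 0) - (if (a, j) = b then 1 else (0::real)))"
  define y where "y = ypt \<gamma> C ((\<beta>, B) # L)"
  have cB: "c \<notin> B" "c \<in> C" and bB: "b \<in> B" "b \<notin> C" using swap.hyps(3,4) by auto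
  have y1: "ypt \<gamma> C ((\<beta>, insert c (B - {b})) # L) = (\<lambda>a j. y a j + \<beta> * v a j)"
  proof (intro ext)
    fix a j
    have "(if (a, j) \<in> insert c (B - {b}) then 1 else 0::real)
        = (if (a, j) \<in> B then 1 else 0) + v a j"
      unfolding v_def using cB bB by auto
    then show "ypt \<gamma> C ((\<beta>, insert c (B - {b})) # L) a j = y a j + \<beta> * v a j"
      unfolding ypt_def y_def by (simp add: algebra_simps)
  qed
  have y2: "ypt \<gamma> (insert b (C - {c})) ((\<beta>, B) # L) = (\<lambda>a j. y a j + (- \<gamma>) * v a j)"
  proof (intro ext)
    fix a j
    have f: "(if (a, j) \<in> insert b (C - {c}) then 1 else 0::real) - (if (a, j) \<in> C then 1 else 0)
        = - v a j"
      unfolding v_def using cB bB by auto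
    have eq: "ypt \<gamma> (insert b (C - {c})) ((\<beta>, B) # L) a j - y a j
       = \<gamma> * ((if (a, j) \<in> insert b (C - {c}) then 1 else 0::real) - (if (a, j) \<in> C then 1 else 0))"
      unfolding ypt_def y_def by (simp add: algebra_simps)
    have "ypt \<gamma> (insert b (C - {c})) ((\<beta>, B) # L) a j - y a j = \<gamma> * (- v a j)"
      by (simp only: eq f)
    then show "ypt \<gamma> (insert b (C - {c})) ((\<beta>, B) # L) a j = y a j + (- \<gamma>) * v a j"
      by (simp add: algebra_simps)
  qed
  have v0: "\<And>a j. a \<noteq> i \<Longrightarrow> v a j = 0" unfolding v_def using swap.hyps(5,6) by auto
  define K where "K = (\<lambda>g::(nat \<times> nat) set \<Rightarrow> real. (\<Sum>\<sigma>\<in>AS k {1..n}. g (gr {1..n} \<sigma>) * v i (\<sigma> i) * (\<Prod>l\<in>{1..n} - {i}. y l (\<sigma> l))))"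
  have E1: "EE k {1..n} (\<lambda>a j. y a j + t * v a j) (\<lambda>\<sigma>. g (gr {1..n} \<sigma>)) = EE k {1..n} y (\<lambda>\<sigma>. g (gr {1..n} \<sigma>)) + t * K g" for t g
    unfolding K_def by (rule EE_affine[OF _ swap.hyps(2) v0]) auto
  have exp: "measure_pmf.expectation (bind_pmf (bernoulli_pmf q) (\<lambda>h. if h then p1 else p2)) g
       = EE k {1..n} y (\<lambda>\<sigma>. g (gr {1..n} \<sigma>))" for g
  proof -
    have "measure_pmf.expectation (bind_pmf (bernoulli_pmf q) (\<lambda>h. if h then p1 else p2)) g
       = q * measure_pmf.expectation p1 g + (1 - q) * measure_pmf.expectation p2 g"
      by (rule bern_expect(1)[OF finite_bases _ _ q01]) (use R1 R2 in auto)
    also have "\<dots> = q * (EE k {1..n} y (\<lambda>\<sigma>. g (gr {1..n} \<sigma>)) + \<beta> * K g)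
        + (1 - q) * (EE k {1..n} y (\<lambda>\<sigma>. g (gr {1..n} \<sigma>)) + (- \<gamma>) * K g)"
      using R1 R2 unfolding y1 y2 E1 by simp
    also have "\<dots> = EE k {1..n} y (\<lambda>\<sigma>. g (gr {1..n} \<sigma>))"
    proof -
      { fix E Kg :: real
      have s: "\<gamma> + \<beta> \<noteq> 0" using swap.prems(1) bpos by simp
      have 1: "1 - q = \<beta> / (\<gamma> + \<beta>)" unfolding q_def using s by (simp add: field_simps)
      have "q * (E + \<beta> * Kg) + (1 - q) * (E + (- \<gamma>) * Kg) = (\<gamma> * (E + \<beta> * Kg) + \<beta> * (E + (- \<gamma>) * Kg)) / (\<gamma> + \<beta>)"
        unfolding 1 unfolding q_def by (simp add: add_divide_distrib)
      also have "\<dots> = ((\<gamma> + \<beta>) * E) / (\<gamma> + \<beta>)" by (simp add: algebra_simps)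
      also have "\<dots> = E" using s by simp
      finally have "q * (E + \<beta> * Kg) + (1 - q) * (E + (- \<gamma>) * Kg) = E" .
    }
    then show ?thesis by blast
    qed
    finally show ?thesis .
  qed
  have sp: "set_pmf (bind_pmf (bernoulli_pmf q) (\<lambda>h. if h then p1 else p2)) \<subseteq> {C. is_base n k C}"
    by (rule bern_expect(2)[OF finite_bases _ _ q01]) (use R1 R2 in auto)
  show ?case using exp sp unfolding q_def y_def by simp
qed



lemma exp_neg_quad: fixes x :: real assumes "0 \<le> x" shows "exp (- x) \<le> 1 - x + x^2/2"
proof -
  let ?f = "\<lambda>x::real. 1 - x + x^2/2 - exp (- x)"
  have "?f 0 \<le> ?f x"
  proof (rule DERIV_nonneg_imp_nondecreasing[OF assms])
    fix y :: real assume "0 \<le> y" "y \<le> x"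
    have "DERIV ?f y :> (- 1 + y + exp (- y))"
      by (rule derivative_eq_intros refl | simp)+
    moreover have "0 \<le> - 1 + y + exp (- y)" using exp_ge_add_one_self[of "- y"] by simp
    ultimately show "\<exists>d. DERIV ?f y :> d \<and> 0 \<le> d" by blast
  qed
  then show ?thesis by simp
qed

definition tup :: "nat \<Rightarrow> nat \<Rightarrow> (nat \<Rightarrow> nat) \<Rightarrow> (nat \<Rightarrow> nat set)" where
  "tup n k \<sigma> = (\<lambda>j. if j \<in> {1..k} then {i \<in> {1..n}. \<sigma> i = j} else {})"

lemma btt_gr: "base_to_tuple k (gr {1..n} \<sigma>) = tup n k \<sigma>"
  unfolding base_to_tuple_def gr_def tup_def by (intro ext) auto

lemma tup_in: "tup n k \<sigma> \<in> ktuples n k"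
  unfolding ktuples_def tup_def by auto

lemma tup_upd:
  assumes "\<sigma> i = 0" "i \<in> {1..n}" "j \<in> {1..k}"
  shows "tup n k (\<sigma>(i:=j)) = (tup n k \<sigma>)(j := insert i (tup n k \<sigma> j))"
    and "i \<notin> (\<Union>l\<in>{1..k}. tup n k \<sigma> l)"
proof -
  show "tup n k (\<sigma>(i:=j)) = (tup n k \<sigma>)(j := insert i (tup n k \<sigma> j))"
  proof
    fix l
    show "tup n k (\<sigma>(i:=j)) l = ((tup n k \<sigma>)(j := insert i (tup n k \<sigma> j))) l"
    proof (cases "l = j")
      case True then show ?thesis using assms unfolding tup_def by auto
    next
      case False then show ?thesis using assms unfolding tup_def by auto
    qed
  qed
  show "i \<notin> (\<Union>l\<in>{1..k}. tup n k \<sigma> l)" using assms unfolding tup_def by auto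
qed

lemma tup_meet:
  assumes "\<forall>l. \<sigma> l \<noteq> 0 \<longrightarrow> \<tau> l = \<sigma> l" "\<tau> i = 0"
  shows "kmeet (tup n k (\<sigma>(i:=j))) (tup n k \<tau>) = tup n k \<sigma>"
proof -
  have si: "\<sigma> i = 0" using assms by force
  show ?thesis unfolding kmeet_def
  proof (intro ext)
    fix l
    show "tup n k (\<sigma>(i := j)) l \<inter> tup n k \<tau> l = tup n k \<sigma> l"
    proof (cases "l \<in> {1..k}")
      case True
      then have l0: "l \<noteq> 0" by auto
      have "{i' \<in> {1..n}. (\<sigma>(i := j)) i' = l} \<inter> {i \<in> {1..n}. \<tau> i = l} = {i \<in> {1..n}. \<sigma> i = l}"
      proof (intro equalityI subsetI)
        fix i' assume "i' \<in> {i' \<in> {1..n}. (\<sigma>(i := j)) i' = l} \<inter> {i \<in> {1..n}. \<tau> i = l}"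
        then show "i' \<in> {i \<in> {1..n}. \<sigma> i = l}" using assms(2) l0 by (cases "i' = i") auto
      next
        fix i' assume a: "i' \<in> {i \<in> {1..n}. \<sigma> i = l}"
        then have "i' \<noteq> i" using si l0 by auto
        then show "i' \<in> {i' \<in> {1..n}. (\<sigma>(i := j)) i' = l} \<inter> {i \<in> {1..n}. \<tau> i = l}"
          using a assms(1) l0 by auto
      qed
      then show ?thesis using True unfolding tup_def by simp
    next
      case False then show ?thesis unfolding tup_def by auto
    qed
  qed
qed

lemma tup_join:
  assumes "\<forall>l. \<sigma> l \<noteq> 0 \<longrightarrow> \<tau> l = \<sigma> l" "\<tau> i = 0" "j \<in> {1..k}"
  shows "kjoin k (tup n k (\<sigma>(i:=j))) (tup n k \<tau>) = tup n k (\<tau>(i:=j))"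
proof -
  have si: "\<sigma> i = 0" using assms by force
  have un: "tup n k (\<sigma>(i:=j)) l \<union> tup n k \<tau> l = tup n k (\<tau>(i:=j)) l" for l
  proof (cases "l \<in> {1..k}")
    case True
    then have l0: "l \<noteq> 0" by auto
    have "{i' \<in> {1..n}. (\<sigma>(i := j)) i' = l} \<union> {i \<in> {1..n}. \<tau> i = l} = {i' \<in> {1..n}. (\<tau>(i := j)) i' = l}"
    proof (intro equalityI subsetI)
      fix i' assume "i' \<in> {i' \<in> {1..n}. (\<sigma>(i := j)) i' = l} \<union> {i \<in> {1..n}. \<tau> i = l}"
      then show "i' \<in> {i' \<in> {1..n}. (\<tau>(i := j)) i' = l}" using assms(1,2) l0 by (cases "i' = i") auto
    next
      fix i' assume "i' \<in> {i' \<in> {1..n}. (\<tau>(i := j)) i' = l}"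
      then show "i' \<in> {i' \<in> {1..n}. (\<sigma>(i := j)) i' = l} \<union> {i \<in> {1..n}. \<tau> i = l}"
        by (cases "i' = i") auto
    qed
    then show ?thesis using True unfolding tup_def by simp
  next
    case False then show ?thesis unfolding tup_def by auto
  qed
  show ?thesis unfolding kjoin_def un
  proof (intro ext)
    fix l
    show "(if l \<in> {1..k} then tup n k (\<tau>(i := j)) l - (\<Union>l'\<in>{1..k} - {l}. tup n k (\<tau>(i := j)) l') else {})
        = tup n k (\<tau>(i := j)) l"
      unfolding tup_def by auto
  qed
qed

lemma tup_inj: "inj_on (tup n k) (AS k {1..n})"
proof (rule inj_onI)
  fix \<sigma> \<sigma>' assume s: "\<sigma> \<in> AS k {1..n}" "\<sigma>' \<in> AS k {1..n}" and e: "tup n k \<sigma> = tup n k \<sigma>'"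
  show "\<sigma> = \<sigma>'"
  proof
    fix i
    show "\<sigma> i = \<sigma>' i"
    proof (cases "i \<in> {1..n}")
      case False then show ?thesis using s unfolding AS_def by auto
    next
      case iU: True
      show ?thesis
      proof (cases "\<sigma> i = 0")
        case True
        show ?thesis
        proof (rule ccontr)
          assume ne: "\<sigma> i \<noteq> \<sigma>' i"
          then have "\<sigma>' i \<in> {1..k}" using True s iU unfolding AS_def by auto
          then have "i \<in> tup n k \<sigma>' (\<sigma>' i)" using iU unfolding tup_def by auto
          then have "i \<in> tup n k \<sigma> (\<sigma>' i)" using e by simp
          then show False using ne unfolding tup_def by (auto split: if_splits)
        qed
      next
        case False
        then have "\<sigma> i \<in> {1..k}" using s iU unfolding AS_def by auto
        then have "i \<in> tup n k \<sigma> (\<sigma> i)" using iU unfolding tup_def by auto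
        then have "i \<in> tup n k \<sigma>' (\<sigma> i)" using e by simp
        then show ?thesis unfolding tup_def by (auto split: if_splits)
      qed
    qed
  qed
qed

lemma tup_surj: assumes "S \<in> ktuples n k" shows "\<exists>\<sigma>\<in>AS k {1..n}. tup n k \<sigma> = S"
proof -
  have Ssub: "\<And>j. j \<in> {1..k} \<Longrightarrow> S j \<subseteq> {1..n}"
    and Sdis: "\<And>j l. j \<in> {1..k} \<Longrightarrow> l \<in> {1..k} \<Longrightarrow> j \<noteq> l \<Longrightarrow> S j \<inter> S l = {}"
    and Semp: "\<And>j. j \<notin> {1..k} \<Longrightarrow> S j = {}"
    using assms unfolding ktuples_def by auto
  define \<sigma> where "\<sigma> i = (if \<exists>j\<in>{1..k}. i \<in> S j then (THE j. j \<in> {1..k} \<and> i \<in> S j) else 0)" for i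
  have sv: "\<sigma> i = j" if "j \<in> {1..k}" "i \<in> S j" for i j
  proof -
    have "(THE j. j \<in> {1..k} \<and> i \<in> S j) = j"
      by (rule the_equality) (use that Sdis in blast)+
    then show ?thesis unfolding \<sigma>_def using that by auto
  qed
  have s0: "\<sigma> i = 0" if "\<forall>j\<in>{1..k}. i \<notin> S j" for i unfolding \<sigma>_def using that by auto
  have sA: "\<sigma> \<in> AS k {1..n}" unfolding AS_def
  proof (intro CollectI allI conjI impI)
    fix i show "\<sigma> i \<le> k"
    proof (cases "\<exists>j\<in>{1..k}. i \<in> S j")
      case True
      then obtain j where "j \<in> {1..k}" "i \<in> S j" by blast
      then show ?thesis using sv by auto
    next
      case False then show ?thesis using s0 by auto
    qed
  next
    fix i assume ni: "i \<notin> {1..n}"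
    have "\<forall>j\<in>{1..k}. i \<notin> S j" using Ssub ni by blast
    then show "\<sigma> i = 0" by (rule s0)
  qed
  have "tup n k \<sigma> = S"
  proof
    fix l show "tup n k \<sigma> l = S l"
    proof (cases "l \<in> {1..k}")
      case True
      have "{i \<in> {1..n}. \<sigma> i = l} = S l"
      proof (intro equalityI subsetI)
        fix i assume a: "i \<in> {i \<in> {1..n}. \<sigma> i = l}"
        then have "\<sigma> i \<noteq> 0" using True by auto
        have "\<exists>j\<in>{1..k}. i \<in> S j"
        proof (rule ccontr)
          assume "\<not> (\<exists>j\<in>{1..k}. i \<in> S j)"
          then have "\<forall>j\<in>{1..k}. i \<notin> S j" by blast
          then have "\<sigma> i = 0" by (rule s0)
          with \<open>\<sigma> i \<noteq> 0\<close> show False by simp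
        qed
        then obtain j where "j \<in> {1..k}" "i \<in> S j" by blast
        then show "i \<in> S l" using sv a by auto
      next
        fix i assume il: "i \<in> S l"
        have "i \<in> {1..n}" using Ssub[OF True] il by blast
        moreover have "\<sigma> i = l" using sv[OF True il] .
        ultimately show "i \<in> {i \<in> {1..n}. \<sigma> i = l}" by simp
      qed
      then show ?thesis using True unfolding tup_def by simp
    next
      case False then show ?thesis by (auto simp: tup_def Semp)
    qed
  qed
  then show ?thesis using sA by blast
qed

lemma tup_bij: "bij_betw (tup n k) (AS k {1..n}) (ktuples n k)"
  unfolding bij_betw_def
proof (intro conjI tup_inj equalityI subsetI)
  fix S assume "S \<in> tup n k ` AS k {1..n}" then show "S \<in> ktuples n k" using tup_in by auto
next
  fix S assume "S \<in> ktuples n k"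
  then obtain \<sigma> where "\<sigma> \<in> AS k {1..n}" "tup n k \<sigma> = S" using tup_surj by blast
  then show "S \<in> tup n k ` AS k {1..n}" by blast
qed

lemma tup_prod:
  assumes "\<sigma> \<in> AS k {1..n}"
  shows "(\<Prod>j\<in>{1..k}. \<Prod>i\<in>tup n k \<sigma> j. x i j)
      * (\<Prod>i\<in>{1..n} - (\<Union>j\<in>{1..k}. tup n k \<sigma> j). 1 - (\<Sum>j\<in>{1..k}. x i j))
      = (\<Prod>i\<in>{1..n}. xbar k x i (\<sigma> i))"
proof -
  have sk: "\<sigma> i \<le> k" for i using assms unfolding AS_def by (cases "i \<in> {1..n}") auto
  have U: "(\<Union>j\<in>{1..k}. tup n k \<sigma> j) = {1..n} \<inter> - {i. \<sigma> i = 0}"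
    unfolding tup_def using sk by auto
  have "(\<Prod>j\<in>{1..k}. \<Prod>i\<in>tup n k \<sigma> j. x i j) = (\<Prod>j\<in>{1..k}. \<Prod>i\<in>tup n k \<sigma> j. x i (\<sigma> i))"
    unfolding tup_def by (intro prod.cong refl) auto
  also have "\<dots> = (\<Prod>i\<in>(\<Union>j\<in>{1..k}. tup n k \<sigma> j). x i (\<sigma> i))"
    by (rule prod.UNION_disjoint[symmetric]) (auto simp: tup_def)
  finally have P1: "(\<Prod>j\<in>{1..k}. \<Prod>i\<in>tup n k \<sigma> j. x i j) = (\<Prod>i\<in>{1..n} \<inter> - {i. \<sigma> i = 0}. x i (\<sigma> i))"
    unfolding U .
  have P2: "{1..n} - (\<Union>j\<in>{1..k}. tup n k \<sigma> j) = {1..n} \<inter> {i. \<sigma> i = 0}" unfolding U by auto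
  have "(\<Prod>i\<in>{1..n}. xbar k x i (\<sigma> i))
      = (\<Prod>i\<in>{1..n}. if \<sigma> i = 0 then 1 - (\<Sum>j\<in>{1..k}. x i j) else x i (\<sigma> i))"
    unfolding xbar_def by (intro prod.cong) auto
  also have "\<dots> = (\<Prod>i\<in>{1..n} \<inter> {i. \<sigma> i = 0}. 1 - (\<Sum>j\<in>{1..k}. x i j)) * (\<Prod>i\<in>{1..n} \<inter> - {i. \<sigma> i = 0}. x i (\<sigma> i))"
    by (rule prod.If_cases) simp
  finally show ?thesis unfolding P1 P2 by (simp add: mult.commute)
qed

lemma ml_EE: "multilinear_ext n k f x = EE k {1..n} (xbar k x) (\<lambda>\<sigma>. f (tup n k \<sigma>))"
proof -
  have "EE k {1..n} (xbar k x) (\<lambda>\<sigma>. f (tup n k \<sigma>))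
     = (\<Sum>\<sigma>\<in>AS k {1..n}. (\<lambda>S. f S * (\<Prod>j\<in>{1..k}. \<Prod>i\<in>S j. x i j)
      * (\<Prod>i\<in>{1..n} - (\<Union>j\<in>{1..k}. S j). 1 - (\<Sum>j\<in>{1..k}. x i j))) (tup n k \<sigma>))"
    unfolding EE_def
  proof (intro sum.cong refl)
    fix \<sigma> assume s: "\<sigma> \<in> AS k {1..n}"
    show "f (tup n k \<sigma>) * (\<Prod>i\<in>{1..n}. xbar k x i (\<sigma> i)) = (\<lambda>S. f S * (\<Prod>j\<in>{1..k}. \<Prod>i\<in>S j. x i j)
      * (\<Prod>i\<in>{1..n} - (\<Union>j\<in>{1..k}. S j). 1 - (\<Sum>j\<in>{1..k}. x i j))) (tup n k \<sigma>)"
      by (simp only: mult.assoc tup_prod[OF s])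
  qed
  also have "\<dots> = multilinear_ext n k f x"
    unfolding multilinear_ext_def by (rule sum.reindex_bij_betw[OF tup_bij])
  finally show ?thesis by simp
qed



lemma xbar_w:
  assumes xP: "polytopeP n k x" and i: "i \<in> {1..n}"
  shows "\<And>j. j \<le> k \<Longrightarrow> 0 \<le> xbar k x i j" and "(\<Sum>j\<le>k. xbar k x i j) = 1"
proof -
  have x0: "\<And>j. j \<in> {1..k} \<Longrightarrow> 0 \<le> x i j" and s1: "(\<Sum>j\<in>{1..k}. x i j) \<le> 1"
    using xP i unfolding polytopeP_def by auto
  show "0 \<le> xbar k x i j" if "j \<le> k" for j
    using that x0 s1 unfolding xbar_def by auto
  have e: "{..k} = insert 0 {1..k}" by auto
  have "(\<Sum>j\<in>{1..k}. xbar k x i j) = (\<Sum>j\<in>{1..k}. x i j)" unfolding xbar_def by (intro sum.cong) auto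
  then show "(\<Sum>j\<le>k. xbar k x i j) = 1" unfolding e by (simp add: xbar_def)
qed

lemma init_ypt:
  assumes dec: "is_decomposition n k x D" and D: "D = d # D'"
  shows "\<And>i j. i \<in> {1..n} \<Longrightarrow> j \<le> k \<Longrightarrow> ypt (fst d) (snd d) D' i j = xbar k x i j"
    and "fst d + sum_list (map fst D') = 1"
    and "0 < fst d" "is_base n k (snd d)" "\<forall>(\<beta>,B)\<in>set D'. 0 < \<beta> \<and> is_base n k B"
proof -
  have sl: "sum_list (map F D') = (\<Sum>l<length D'. F (D' ! l))" for F :: "real \<times> (nat \<times> nat) set \<Rightarrow> real"
    by (simp add: sum_list_sum_nth atLeast0LessThan)
  have shift: "(\<Sum>l<length D. G (D ! l)) = G d + (\<Sum>l<length D'. G (D' ! l))" for G :: "real \<times> (nat \<times> nat) set \<Rightarrow> real"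
    unfolding D length_Cons sum.lessThan_Suc_shift by simp
  show "fst d + sum_list (map fst D') = 1"
    using dec shift[of fst] sl[of fst] unfolding is_decomposition_def by simp
  show "0 < fst d" "is_base n k (snd d)" "\<forall>(\<beta>,B)\<in>set D'. 0 < \<beta> \<and> is_base n k B"
    using dec unfolding is_decomposition_def D by (auto simp: case_prod_beta)
  fix i j assume i: "i \<in> {1..n}" and j: "j \<le> k"
  have "xbar k x i j = (\<Sum>l<length D. fst (D ! l) * (if (i, j) \<in> snd (D ! l) then 1 else 0))"
    using dec i j unfolding is_decomposition_def by auto
  also have "\<dots> = fst d * (if (i, j) \<in> snd d then 1 else 0) + (\<Sum>l<length D'. fst (D' ! l) * (if (i, j) \<in> snd (D' ! l) then 1 else 0))"
    using shift[of "\<lambda>p. fst p * (if (i, j) \<in> snd p then 1 else 0)"] by simp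
  also have "\<dots> = ypt (fst d) (snd d) D' i j"
  proof -
    have fe: "(\<lambda>(\<beta>::real, B). \<beta> * (if (i,j) \<in> B then 1 else 0::real)) = (\<lambda>p. fst p * (if (i,j) \<in> snd p then 1 else 0))"
      by (auto simp: fun_eq_iff)
    show ?thesis unfolding ypt_def fe using sl[of "\<lambda>p. fst p * (if (i, j) \<in> snd p then 1 else 0)"] by simp
  qed
  finally show "ypt (fst d) (snd d) D' i j = xbar k x i j" by simp
qed

theorem mainTheorem9:
  fixes n k :: nat and f :: "(nat \<Rightarrow> nat set) \<Rightarrow> real" and x :: "nat \<Rightarrow> nat \<Rightarrow> real"
    and D :: "(real \<times> (nat \<times> nat) set) list" and p :: "(nat \<times> nat) set pmf"
  assumes k: "k \<ge> 1"
    and nonneg: "\<forall>S\<in>ktuples n k. f S \<ge> 0"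
    and mono: "k_monotone n k f"
    and ksub: "k_submodular n k f"
    and marg: "\<forall>S\<in>ktuples n k. \<forall>e\<in>{1..n}. \<forall>j\<in>{1..k}. e \<notin> (\<Union>l\<in>{1..k}. S l) \<longrightarrow>
                 0 \<le> marginal f e j S \<and> marginal f e j S \<le> 1"
    and xP: "polytopeP n k x"
    and dec: "is_decomposition n k x D"
    and rnd: "swap_round n (fst (hd D)) (snd (hd D)) (tl D) p"
  shows "measure_pmf.expectation p (\<lambda>C. f (base_to_tuple k C)) \<ge> multilinear_ext n k f x
    \<and> (\<forall>\<delta>>0. measure_pmf.prob p {C. f (base_to_tuple k C) \<le> (1 - \<delta>) * multilinear_ext n k f x}
            \<le> exp (- multilinear_ext n k f x * \<delta>^2 / 8))"
proof -
  have "D \<noteq> []" using dec unfolding is_decomposition_def by auto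
  then obtain d D' where D: "D = d # D'" by (cases D) auto
  note I = init_ypt[OF dec D]
  have SM: "set_pmf p \<subseteq> {C. is_base n k C} \<and>
    (\<forall>g. measure_pmf.expectation p g = EE k {1..n} (ypt (fst d) (snd d) D') (\<lambda>\<sigma>. g (gr {1..n} \<sigma>)))"
    using swap_main[of n "fst d" "snd d" D' p k] rnd I(2-5) unfolding D by simp
  have Ep: "measure_pmf.expectation p g = EE k {1..n} (xbar k x) (\<lambda>\<sigma>. g (gr {1..n} \<sigma>))" for g
    using SM EE_cong_w[of "{1..n}" k "ypt (fst d) (snd d) D'" "xbar k x"] I(1) by auto
  define h where "h \<sigma> = f (tup n k \<sigma>)" for \<sigma>
  define \<mu> where "\<mu> = multilinear_ext n k f x"
  have mu: "\<mu> = EE k {1..n} (xbar k x) h" unfolding \<mu>_def h_def by (rule ml_EE)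
  have hnn: "0 \<le> h \<sigma>" for \<sigma> unfolding h_def using nonneg tup_in by blast
  have W0: "\<And>i j. i \<in> {1..n} \<Longrightarrow> j \<le> k \<Longrightarrow> 0 \<le> xbar k x i j" using xbar_w(1)[OF xP] by blast
  have W1: "\<And>i. i \<in> {1..n} \<Longrightarrow> (\<Sum>j\<le>k. xbar k x i j) = 1" using xbar_w(2)[OF xP] by blast
  have Eq: "measure_pmf.expectation p (\<lambda>C. f (base_to_tuple k C)) = \<mu>"
    unfolding Ep mu h_def btt_gr ..
  have mu0: "0 \<le> \<mu>"
  proof -
    have "EE k {1..n} (xbar k x) (\<lambda>_. 0) \<le> EE k {1..n} (xbar k x) h"
      by (rule EE_mono[OF _ W0]) (auto simp: hnn)
    then show ?thesis unfolding mu by (simp add: EE_def)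
  qed
  have H1: "0 \<le> h (\<sigma>(i:=j)) - h \<sigma> \<and> h (\<sigma>(i:=j)) - h \<sigma> \<le> 1"
    if "\<sigma> \<in> AS k {1..n}" "i \<in> {1..n}" "j \<in> {1..k}" "\<sigma> i = 0" for \<sigma> i j
  proof -
    have "h (\<sigma>(i:=j)) - h \<sigma> = marginal f i j (tup n k \<sigma>)"
      unfolding h_def marginal_def tup_upd(1)[where \<sigma>=\<sigma> and i=i and n=n and j=j and k=k, OF that(4,2,3)] ..
    then show ?thesis using marg tup_in[of n k \<sigma>] that(2,3) tup_upd(2)[where \<sigma>=\<sigma> and i=i and n=n and j=j and k=k, OF that(4,2,3)] by auto
  qed
  have H2: "h (\<tau>(i:=j)) - h \<tau> \<le> h (\<sigma>(i:=j)) - h \<sigma>"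
    if "\<sigma> \<in> AS k {1..n}" "\<tau> \<in> AS k {1..n}" "\<forall>l. \<sigma> l \<noteq> 0 \<longrightarrow> \<tau> l = \<sigma> l"
       "i \<in> {1..n}" "\<tau> i = 0" "j \<in> {1..k}" for \<sigma> \<tau> i j
  proof -
    have "f (tup n k (\<sigma>(i:=j))) + f (tup n k \<tau>) \<ge>
        f (kmeet (tup n k (\<sigma>(i:=j))) (tup n k \<tau>)) + f (kjoin k (tup n k (\<sigma>(i:=j))) (tup n k \<tau>))"
      using ksub tup_in unfolding k_submodular_def by blast
    then show ?thesis unfolding h_def tup_meet[OF that(3,5)] tup_join[OF that(3,5,6)] by simp
  qed
  have prob: "measure_pmf.prob p {C. f (base_to_tuple k C) \<le> (1 - \<delta>) * \<mu>} \<le> exp (- \<mu> * \<delta>^2 / 8)"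
    if dpos: "\<delta> > 0" for \<delta>
  proof -
    define t where "t = (1 - \<delta>) * \<mu>"
    define a where "a = exp (- \<delta>) - 1"
    have "measure_pmf.prob p {C. f (base_to_tuple k C) \<le> t}
        = measure_pmf.expectation p (indicator {C. f (base_to_tuple k C) \<le> t})" by simp
    also have "\<dots> = EE k {1..n} (xbar k x) (\<lambda>\<sigma>. indicator {C. f (base_to_tuple k C) \<le> t} (gr {1..n} \<sigma>))"
      by (rule Ep)
    also have "\<dots> \<le> EE k {1..n} (xbar k x) (\<lambda>\<sigma>. exp (\<delta> * t) * exp (- \<delta> * h \<sigma>))"
    proof (rule EE_mono[OF _ W0])
      fix \<sigma>
      show "indicator {C. f (base_to_tuple k C) \<le> t} (gr {1..n} \<sigma>) \<le> exp (\<delta> * t) * exp (- \<delta> * h \<sigma>)"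
      proof (cases "h \<sigma> \<le> t")
        case True
        have "0 \<le> \<delta> * t + - \<delta> * h \<sigma>" using True dpos by (simp add: algebra_simps mult_left_mono)
        then have "1 \<le> exp (\<delta> * t + - \<delta> * h \<sigma>)" by simp
        then have "1 \<le> exp (\<delta> * t) * exp (- \<delta> * h \<sigma>)" by (simp only: mult_exp_exp)
        moreover have "indicator {C. f (base_to_tuple k C) \<le> t} (gr {1..n} \<sigma>) \<le> (1::real)"
          by (simp add: indicator_def)
        ultimately show ?thesis by linarith
      next
        case False
        then have "\<not> f (base_to_tuple k (gr {1..n} \<sigma>)) \<le> t" unfolding h_def btt_gr .
        then show ?thesis by (simp add: indicator_def)
      qed
    qed auto
    also have "\<dots> = exp (\<delta> * t) * EE k {1..n} (xbar k x) (\<lambda>\<sigma>. exp (- \<delta> * h \<sigma>))"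
      by (rule EE_cmult)
    also have "\<dots> \<le> exp (\<delta> * t) * exp (- \<delta> * h (\<lambda>_. 0) + a * (\<mu> - h (\<lambda>_. 0)))"
    proof (rule mult_left_mono)
      have z: "(\<lambda>_. 0::nat) \<in> AS k {1..n}" unfolding AS_def by auto
      have mgz: "mg {1..n} \<tau> (\<lambda>_. 0) = \<tau>" if "\<tau> \<in> AS k {1..n}" for \<tau>
        using that unfolding mg_def AS_def by auto
      have "EE k {1..n} (xbar k x) (\<lambda>\<tau>. exp (- \<delta> * h (mg {1..n} \<tau> (\<lambda>_. 0))))
          \<le> exp (- \<delta> * h (\<lambda>_. 0) + (exp (- \<delta>) - 1) * (EE k {1..n} (xbar k x) (\<lambda>\<tau>. h (mg {1..n} \<tau> (\<lambda>_. 0))) - h (\<lambda>_. 0)))"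
        by (rule mgf_bound[OF _ W0 W1 H1 H2]) (use dpos z in auto)
      moreover have "EE k {1..n} (xbar k x) (\<lambda>\<tau>. exp (- \<delta> * h (mg {1..n} \<tau> (\<lambda>_. 0))))
          = EE k {1..n} (xbar k x) (\<lambda>\<tau>. exp (- \<delta> * h \<tau>))"
      proof (rule EE_cong)
        fix \<tau> assume "\<tau> \<in> AS k {1..n}"
        then show "exp (- \<delta> * h (mg {1..n} \<tau> (\<lambda>_. 0))) = exp (- \<delta> * h \<tau>)" using mgz by metis
      qed
      moreover have "EE k {1..n} (xbar k x) (\<lambda>\<tau>. h (mg {1..n} \<tau> (\<lambda>_. 0))) = \<mu>"
        unfolding mu
      proof (rule EE_cong)
        fix \<tau> assume "\<tau> \<in> AS k {1..n}"
        then show "h (mg {1..n} \<tau> (\<lambda>_. 0)) = h \<tau>" using mgz by metis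
      qed
      ultimately show "EE k {1..n} (xbar k x) (\<lambda>\<sigma>. exp (- \<delta> * h \<sigma>)) \<le> exp (- \<delta> * h (\<lambda>_. 0) + a * (\<mu> - h (\<lambda>_. 0)))"
        unfolding a_def by simp
    qed simp
    also have "\<dots> \<le> exp (- \<mu> * \<delta>^2 / 8)"
    proof -
      have a1: "a \<le> - \<delta> + \<delta>^2 / 2" using exp_neg_quad[of \<delta>] dpos unfolding a_def by simp
      have a2: "0 \<le> \<delta> + a" using exp_ge_add_one_self[of "- \<delta>"] unfolding a_def by simp
      have "a * \<mu> \<le> (- \<delta> + \<delta>^2 / 2) * \<mu>" using a1 mu0 by (rule mult_right_mono)
      moreover have "0 \<le> (\<delta> + a) * h (\<lambda>_. 0)" using a2 hnn by simp
      moreover have "0 \<le> \<delta>^2 * \<mu>" using mu0 by simp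
      ultimately have "\<delta> * t + (- \<delta> * h (\<lambda>_. 0) + a * (\<mu> - h (\<lambda>_. 0))) \<le> - \<mu> * \<delta>^2 / 8"
        unfolding t_def by (simp add: algebra_simps power2_eq_square)
      then show ?thesis by (simp add: exp_add[symmetric])
    qed
    finally show ?thesis unfolding t_def .
  qed
  show ?thesis using Eq prob unfolding \<mu>_def by simp
qed


end
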